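(* In the setting below, assume that $g(x)$ and $l(x)$ are both self-reciprocal. If $\gcd(t_{22}(x),g_{12}(x))\neq 1$, then $C$ is not Euclidean LCD.
   Context: Let $q$ be a prime power, $F=\mathbb{F}_q$, $m\ge1$ with $\gcd(q,m)=1$, and $R=F[x]/\langle x^m-1\rangle$; elements of $R$ are represented by polynomials of degree $<m$ and identified with their coefficient vectors in $F^m$. A quasi-cyclic code of length $2m$ and index $2$ is an $R$-submodule $C\subseteq R^2$. The Euclidean inner product of $(a_1,a_2),(b_1,b_2)\in R^2$ is the sum of the standard dot products of the coefficient vectors of $a_1,b_1$ and of $a_2,b_2$; $C$ is Euclidean LCD if $C\cap C^{\perp_e}=\{0\}$. For a nonzero polynomial $f$ of degree $k$, $f^*(x)=x^kf(x^{-1})$; $f$ is self-reciprocal if $f^*=\alpha f$ for some $\alpha\in F$. Suppose $C$ is generated as an $R$-module by $(g_{11}(x),g_{12}(x))$ and $(0,g_{22}(x))$, where $g_{11},g_{12},g_{22}\in F[x]$ satisfy: $g_{11}\mid x^m-1$, $g_{22}\mid x^m-1$, $\deg g_{12}<\deg g_{22}$, and $g_{11}g_{22}\mid (x^m-1)g_{12}$. Define $g=\gcd(g_{11},g_{22})$, $l=(x^m-1)/\mathrm{lcm}(g_{11},g_{22})$, $g_{22}=g\,g_{22}'$, $r_{22}=\gcd(g_{22}',g_{22}'^* )$, $t_{22}=g_{22}'/r_{22}$. *)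

theory Defs
  imports "HOL-Computational_Algebra.Computational_Algebra" "HOL-Library.Cardinality"
begin

definition xm1 :: "nat \<Rightarrow> 'a::comm_ring_1 poly" where
  "xm1 m = monom 1 m - 1"

text \<open>Elements of R = F[x]/(x^m-1) are polynomials of degree < m.\<close>
definition in_R :: "nat \<Rightarrow> 'a::zero poly \<Rightarrow> bool" where
  "in_R m p \<longleftrightarrow> degree p < m"

definition qc_code :: "nat \<Rightarrow> 'a::field poly \<Rightarrow> 'a poly \<Rightarrow> 'a poly \<Rightarrow> ('a poly \<times> 'a poly) set" where
  "qc_code m g11 g12 g22 =
     {((a * g11) mod xm1 m, (a * g12 + b * g22) mod xm1 m) | a b. True}"

definition eip :: "nat \<Rightarrow> ('a::comm_ring_1 poly \<times> 'a poly) \<Rightarrow> ('a poly \<times> 'a poly) \<Rightarrow> 'a" where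
  "eip m u v = (\<Sum>i<m. coeff (fst u) i * coeff (fst v) i) + (\<Sum>i<m. coeff (snd u) i * coeff (snd v) i)"

definition euclid_dual :: "nat \<Rightarrow> ('a::comm_ring_1 poly \<times> 'a poly) set \<Rightarrow> ('a poly \<times> 'a poly) set" where
  "euclid_dual m C = {v. in_R m (fst v) \<and> in_R m (snd v) \<and> (\<forall>c\<in>C. eip m v c = 0)}"

definition euclidean_LCD :: "nat \<Rightarrow> ('a::comm_ring_1 poly \<times> 'a poly) set \<Rightarrow> bool" where
  "euclidean_LCD m C \<longleftrightarrow> C \<inter> euclid_dual m C = {(0, 0)}"

text \<open>f^* = x^(deg f) f(1/x) is the library's reflect_poly.\<close>
definition self_reciprocal :: "'a::field poly \<Rightarrow> bool" where
  "self_reciprocal f \<longleftrightarrow> f \<noteq> 0 \<and> (\<exists>\<alpha>. reflect_poly f = smult \<alpha> f)"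

end

theory Submission imports Defs "HOL-Number_Theory.Residues" begin
hide_const (open) UnivPoly.coeff UnivPoly.monom Module.smult

lemma char_ok:
  assumes "coprime (CARD('a::{field,finite})) m"
  shows "of_nat m \<noteq> (0::'a)"
proof
  assume "of_nat m = (0::'a)"
  hence "CHAR('a) dvd m" by (simp add: of_nat_eq_0_iff_char_dvd)
  moreover have "CHAR('a) dvd CARD('a)" by (rule CHAR_dvd_CARD)
  ultimately have "is_unit (CHAR('a))" using coprime_common_divisor[OF assms] by blast
  hence "CHAR('a) = 1" by simp
  hence "of_nat 1 = (0::'a)" by (metis of_nat_CHAR)
  thus False by simp
qed

lemma degree_xm1: "m \<ge> 1 \<Longrightarrow> degree (xm1 m :: 'a::field poly) = m"
proof -
  assume m: "m \<ge> 1"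
  have "xm1 m = Polynomial.monom (1::'a) m + (-1)" by (simp add: xm1_def)
  also have "degree \<dots> = degree (Polynomial.monom (1::'a) m)"
    using m by (intro degree_add_eq_left) (simp add: degree_monom_eq)
  finally show ?thesis by (simp add: degree_monom_eq)
qed

lemma xm1_nz: "m \<ge> 1 \<Longrightarrow> xm1 m \<noteq> (0::'a::field poly)"
  using degree_xm1[of m, where 'a='a] by auto

lemma sqfree:
  fixes p :: "'a::field poly"
  assumes m: "m \<ge> 1" and ch: "of_nat m \<noteq> (0::'a)" and d: "p * p dvd xm1 m"
  shows "is_unit p"
proof -
  obtain k where k: "xm1 m = p * p * k" using d by (auto elim: dvdE)
  have "pderiv (xm1 m) = p * (2 * pderiv p * k + p * pderiv k)"
    unfolding k by (simp add: pderiv_mult algebra_simps)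
  hence pd: "p dvd pderiv (xm1 m)" by simp
  have "pderiv (xm1 m :: 'a poly) = Polynomial.monom (of_nat m) (m - 1)"
    unfolding xm1_def by (subst pderiv_diff) (simp add: pderiv_monom)
  also have "\<dots> = smult (of_nat m) (Polynomial.monom 1 (m - 1))" by (simp add: smult_monom)
  finally have "p dvd smult (of_nat m) (Polynomial.monom 1 (m - 1))" using pd by simp
  hence d1: "p dvd Polynomial.monom 1 (m-1)" using ch by (rule dvd_smult_cancel)
  obtain j where j: "m = Suc j" using m by (cases m) auto
  have "p dvd Polynomial.monom 1 (m-1) * Polynomial.monom 1 1" using d1 by (rule dvd_mult2)
  moreover have "Polynomial.monom 1 (m-1) * Polynomial.monom 1 1 = (Polynomial.monom 1 m :: 'a poly)"
    unfolding j by (simp add: mult_monom)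
  ultimately have "p dvd Polynomial.monom 1 m" by simp
  moreover have "p dvd xm1 m" using d by (meson dvd_mult_left)
  ultimately have "p dvd Polynomial.monom 1 m - xm1 m" by (rule dvd_diff)
  thus ?thesis by (simp add: xm1_def)
qed

lemma coeff_xm1: "coeff (xm1 m :: 'a::field poly) k = (if k = m then 1 else 0) - (if k = 0 then 1 else 0)"
  by (simp add: xm1_def coeff_monom)

lemma reflect_xm1: assumes m: "m \<ge> 1" shows "reflect_poly (xm1 m :: 'a::field poly) = - xm1 m"
proof (rule poly_eqI)
  fix n
  show "coeff (reflect_poly (xm1 m :: 'a poly)) n = coeff (- xm1 m) n"
  proof (cases "n > m")
    case True thus ?thesis by (simp add: coeff_reflect_poly degree_xm1[OF m] coeff_xm1)
  next
    case False
    hence "coeff (reflect_poly (xm1 m :: 'a poly)) n = coeff (xm1 m :: 'a poly) (m - n)"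
      by (simp add: coeff_reflect_poly degree_xm1[OF m])
    also have "\<dots> = coeff (- xm1 m) n"
    proof -
      consider "n = 0" | "n = m" | "0 < n \<and> n < m" using False by linarith
      thus ?thesis
      proof cases
        case 1 thus ?thesis using m by (simp add: coeff_xm1)
      next
        case 2 thus ?thesis using m by (simp add: coeff_xm1)
      next
        case 3
        hence "m - n \<noteq> m" "m - n \<noteq> 0" by auto
        thus ?thesis using 3 by (simp add: coeff_xm1)
      qed
    qed
    finally show ?thesis .
  qed
qed

lemma orth:
  fixes u v :: "'a::field poly"
  assumes m: "m \<ge> 1" and du: "degree u < m" and dv: "degree v < m"
    and d: "xm1 m dvd u * (Polynomial.monom 1 (m - 1 - degree v) * reflect_poly v)"
  shows "(\<Sum>i<m. coeff u i * coeff v i) = 0"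
proof -
  define r where "r = Polynomial.monom 1 (m - 1 - degree v) * reflect_poly v"
  have cr: "coeff r j = (if j < m then coeff v (m - 1 - j) else 0)" for j
    unfolding r_def using dv
    by (auto simp: coeff_monom_mult coeff_reflect_poly coeff_eq_0)
  have "coeff (u * r) (m - 1) = (\<Sum>i\<le>m-1. coeff u i * coeff r (m - 1 - i))"
    by (simp add: coeff_mult)
  also have "\<dots> = (\<Sum>i<m. coeff u i * coeff v i)"
  proof -
    have "{..m-1} = {..<m}" using m by auto
    moreover have "\<And>i. i < m \<Longrightarrow> coeff r (m - 1 - i) = coeff v i" using cr by auto
    ultimately show ?thesis by simp
  qed
  finally have eq: "(\<Sum>i<m. coeff u i * coeff v i) = coeff (u * r) (m - 1)" ..
  obtain Q where Q: "u * r = xm1 m * Q" using d unfolding r_def by (auto elim: dvdE)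
  show ?thesis
  proof (cases "Q = 0")
    case True thus ?thesis using eq Q by simp
  next
    case False
    have "degree r \<le> degree (Polynomial.monom (1::'a) (m - 1 - degree v)) + degree (reflect_poly v)"
      unfolding r_def by (rule degree_mult_le)
    moreover have "degree (Polynomial.monom (1::'a) (m - 1 - degree v)) \<le> m - 1 - degree v"
      by (rule degree_monom_le)
    moreover have "degree (reflect_poly v) \<le> degree v" by (rule degree_reflect_poly_le)
    ultimately have dr: "degree r < m" using dv by linarith
    have "degree (u * r) \<le> degree u + degree r" by (rule degree_mult_le)
    hence "degree (u*r) \<le> 2*m - 2" using du dr by linarith
    moreover have "degree (xm1 m * Q) = m + degree Q"
      using degree_mult_eq[OF xm1_nz[OF m] False] degree_xm1[OF m] by simp
    ultimately have "m + degree Q \<le> 2 * m - 2" using Q by simp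
    hence dQ: "degree Q < m - 1" using m by linarith
    have "coeff (u*r) (m-1) = coeff (Polynomial.monom 1 m * Q) (m - 1) - coeff Q (m - 1)"
      unfolding Q xm1_def by (simp add: algebra_simps)
    also have "\<dots> = 0" using dQ by (simp add: coeff_monom_mult coeff_eq_0)
    finally show ?thesis using eq by simp
  qed
qed


theorem lemma3p4:
  fixes m :: nat and g11 g12 g22 :: "'a::{field_gcd, finite} poly"
  assumes "m \<ge> 1"
    and "coprime (CARD('a)) m"
    and "g11 dvd xm1 m" and "g22 dvd xm1 m"
    and "g12 = 0 \<or> degree g12 < degree g22"
    and "g11 * g22 dvd xm1 m * g12"
    and "self_reciprocal (gcd g11 g22)"  \<comment> \<open>g\<close>
    and "self_reciprocal (xm1 m div lcm g11 g22)"  \<comment> \<open>l\<close>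
    and "let g = gcd g11 g22; g22' = g22 div g; r22 = gcd g22' (reflect_poly g22');
             t22 = g22' div r22 in gcd t22 g12 \<noteq> 1"
  shows "\<not> euclidean_LCD m (qc_code m g11 g12 g22)"
proof
  assume lcd: "euclidean_LCD m (qc_code m g11 g12 g22)"
  note m = assms(1)
  define X where "X = (xm1 m :: 'a poly)"
  define g where "g = gcd g11 g22"
  define g22' where "g22' = g22 div g"
  define r22 where "r22 = gcd g22' (reflect_poly g22')"
  define t22 where "t22 = g22' div r22"
  define l where "l = X div lcm g11 g22"
  have ch: "of_nat m \<noteq> (0::'a)" using char_ok assms(2) by blast
  have Xnz: "X \<noteq> 0" unfolding X_def using xm1_nz[OF m] .
  have sq: "\<And>p. p * p dvd X \<Longrightarrow> is_unit p" unfolding X_def using sqfree[OF m ch] by blast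
  have gt: "gcd t22 g12 \<noteq> 1" using assms(9) unfolding Let_def t22_def r22_def g22'_def g_def .
  have d11: "g11 dvd X" and d22: "g22 dvd X" using assms(3,4) unfolding X_def by auto
  have g22nz: "g22 \<noteq> 0" using d22 Xnz by auto
  have gd22: "g dvd g22" unfolding g_def by simp
  have gnz: "g \<noteq> 0" unfolding g_def using g22nz by simp
  have g22eq: "g22 = g * g22'" unfolding g22'_def using gd22 by simp
  have g22'nz: "g22' \<noteq> 0" using g22eq g22nz by auto
  have r22d: "r22 dvd g22'" unfolding r22_def by simp
  have g22'eq: "g22' = r22 * t22" unfolding t22_def using r22d by simp
  have t22nz: "t22 \<noteq> 0" using g22'eq g22'nz by auto
  have gnz2: "gcd t22 g12 \<noteq> 0" using t22nz by simp
  have nu: "\<not> is_unit (gcd t22 g12)" using gt by simp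
  obtain p where pp: "prime p" and pd: "p dvd gcd t22 g12"
    using prime_divisor_exists[OF gnz2 nu] by blast
  have pt: "p dvd t22" and pg12: "p dvd g12" using pd by auto
  have pu: "\<not> is_unit p" using pp not_prime_unit by blast
  have pg22': "p dvd g22'" using pt g22'eq by simp
  have pg22: "p dvd g22" using pg22' g22eq by simp
  have pX: "p dvd X" using pg22 d22 by (rule dvd_trans)
  have png: "\<not> p dvd g"
  proof
    assume "p dvd g"
    hence "p * p dvd g * g22'" using pg22' by (rule mult_dvd_mono)
    hence "p * p dvd X" using g22eq d22 by (metis dvd_trans)
    thus False using sq pu by blast
  qed
  have png11: "\<not> p dvd g11"
  proof
    assume "p dvd g11"
    hence "p dvd g" unfolding g_def using pg22 by simp
    thus False using png by simp
  qed
  have pnr: "\<not> p dvd reflect_poly g22'"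
  proof
    assume "p dvd reflect_poly g22'"
    hence "p dvd r22" unfolding r22_def using pg22' by simp
    hence "p * p dvd r22 * t22" using pt by (rule mult_dvd_mono)
    hence "p * p dvd X" using g22'eq g22eq d22
      by (metis dvd_mult2 dvd_trans mult.commute)
    thus False using sq pu by blast
  qed
  have nref: "\<not> p dvd reflect_poly f" if sr: "self_reciprocal f" and nf: "\<not> p dvd f" for f
  proof
    assume a: "p dvd reflect_poly f"
    from sr obtain \<alpha> where fnz: "f \<noteq> 0" and e: "reflect_poly f = smult \<alpha> f"
      unfolding self_reciprocal_def by blast
    show False
    proof (cases "\<alpha> = 0")
      case True thus False using e fnz by simp
    next
      case False
      hence "p dvd f" using a e dvd_smult_cancel by metis
      thus False using nf by simp
    qed
  qed
  have pnrg: "\<not> p dvd reflect_poly g" using nref[OF assms(7)[folded g_def] png] .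
  have lcmX: "lcm g11 g22 dvd X" using d11 d22 by simp
  have Xeq: "X = l * lcm g11 g22" unfolding l_def using lcmX by simp
  have pnl: "\<not> p dvd l"
  proof
    assume "p dvd l"
    moreover have "p dvd lcm g11 g22" using pg22 by (meson dvd_lcm2 dvd_trans)
    ultimately have "p * p dvd l * lcm g11 g22" by (rule mult_dvd_mono)
    thus False using Xeq sq pu by simp
  qed
  have pnrl: "\<not> p dvd reflect_poly l"
    using nref[OF assms(8)[folded X_def, folded l_def] pnl] .
  have "lcm g11 g22 dvd g11 * g22" by (simp add: lcm_least)
  hence "X dvd l * (g11 * g22)" using Xeq by simp
  then obtain k where "l * (g11 * g22) = X * k" by (auto elim: dvdE)
  hence "reflect_poly l * (reflect_poly g11 * reflect_poly g22) = reflect_poly X * reflect_poly k"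
    by (metis reflect_poly_mult)
  moreover have "p dvd reflect_poly X" unfolding X_def reflect_xm1[OF m] using pX X_def by simp
  ultimately have "p dvd reflect_poly l * (reflect_poly g11 * reflect_poly g22)" by simp
  moreover have "reflect_poly g22 = reflect_poly g * reflect_poly g22'"
    using g22eq reflect_poly_mult by metis
  ultimately have prg11: "p dvd reflect_poly g11"
    using pp pnrl pnrg pnr by (simp add: prime_dvd_mult_iff)
  define h where "h = X div p"
  have hp: "X = h * p" unfolding h_def using pX by simp
  have hnz: "h \<noteq> 0" using hp Xnz by auto
  define u where "u = (h * g11) mod X"
  obtain k12 where k12: "g12 = p * k12" using pg12 by (auto elim: dvdE)
  have "(h * g12 + 0 * g22) mod X = 0" unfolding k12 hp
    by (simp add: mult.assoc)
  hence "(u, 0) = ((h * g11) mod X, (h * g12 + 0 * g22) mod X)" unfolding u_def by simp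
  hence mem: "(u, 0) \<in> qc_code m g11 g12 g22" unfolding qc_code_def X_def by blast
  have unz: "u \<noteq> 0"
  proof
    assume "u = 0"
    hence "h * p dvd h * g11" unfolding u_def hp by (simp add: mod_eq_0_iff_dvd)
    hence "p dvd g11" using hnz by simp
    thus False using png11 by simp
  qed
  have degX: "degree X = m" unfolding X_def using degree_xm1[OF m] .
  have degmod: "degree (a mod X) < m" for a
    using degree_mod_less[OF Xnz, of a] degX m by auto
  have dual: "(u, 0) \<in> euclid_dual m (qc_code m g11 g12 g22)"
    unfolding euclid_dual_def in_R_def
  proof (intro CollectI conjI ballI)
    show "degree (fst (u, 0::'a poly)) < m" unfolding u_def using degmod by simp
    show "degree (snd (u, 0::'a poly)) < m" using m by simp
    fix c assume "c \<in> qc_code m g11 g12 g22"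
    then obtain a b where c: "c = ((a * g11) mod X, (a * g12 + b * g22) mod X)"
      unfolding qc_code_def X_def by blast
    define v where "v = (a * g11) mod X"
    have hu: "h dvd u" unfolding u_def using hp by (simp add: dvd_mod)
    have gv: "g11 dvd v" unfolding v_def using d11 by (simp add: dvd_mod)
    have "reflect_poly g11 dvd reflect_poly v" using gv by (metis dvdE dvdI reflect_poly_mult)
    hence "p dvd reflect_poly v" using prg11 by (meson dvd_trans)
    hence "h * p dvd u * (Polynomial.monom 1 (m - 1 - degree v) * reflect_poly v)"
      using hu by (simp add: mult_dvd_mono)
    hence "xm1 m dvd u * (Polynomial.monom 1 (m - 1 - degree v) * reflect_poly v)"
      using hp X_def by simp
    hence "(\<Sum>i<m. coeff u i * coeff v i) = 0"
      using orth[OF m _ _] degmod unfolding u_def v_def by blast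
    thus "eip m (u, 0) c = 0" unfolding eip_def c v_def by simp
  qed
  have "(u, 0) \<in> qc_code m g11 g12 g22 \<inter> euclid_dual m (qc_code m g11 g12 g22)"
    using mem dual by blast
  hence "(u, 0) = ((0::'a poly), (0::'a poly))" using lcd unfolding euclidean_LCD_def by blast
  thus False using unz by simp
qed

end
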